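(* In the construction below, every $E^*\subseteq E$ with $|E^*| > st+2k$ satisfies $\alpha(E^* ) < A$; in particular, no such $E^*$ is an admissible solution of the constructed CSCN instance.
   Context: Let $G'=(V',E')$ be a connected undirected graph, let $S=\{u_1,\dots,u_s\}\subseteq V'$ with $s=|S|$, and let $k\ge 0$ be a real number with $|E'|\ge 2k$. Let $t\ge 1$ be an integer. Let $V = V'\cup\{v_{i,j} : 1\le i\le s,\ 1\le j\le t\}$ (the $v_{i,j}$ are new vertices) and let $E$ be the set of all pairs of vertices of $V$ (edges undirected). Define $w^*:E\to\mathbb{R}$ by: $w^*(\{v_{i,j},u_i\})=1$ for all $i,j$; $w^*(\{v_{i,j},u\})=0$ for every $u\in V\setminus\{u_i\}$; $w^*(e)=\frac12$ for every $e\in E'$; $w^*(\{u,u'\})=0$ for $u,u'\in V'$ with $\{u,u'\}\notin E'$. Set $A=\frac{st+k}{st+2k}$ and $B=\frac{\frac12(|E'|-2k)}{st+2k}$. For nonempty $E^*\subseteq E$ let $\alpha(E^* )=\frac{\sum_{e\in E^*}w^*(e)}{|E^*|}$ and $\beta(E^* )=\frac{\sum_{e\in E\setminus E^*}w^*(e)}{|E^*|}$. The graph induced by $E^*$ has vertex set the vertices incident to some edge of $E^*$ and edge set $E^*$. An admissible solution of the constructed CSCN instance is a nonempty $E^*\subseteq E$ whose induced graph is connected and which satisfies $\alpha(E^* )\ge A$ and $\beta(E^* )\le B$. *)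

theory Defs
  imports Complex_Main
begin

definition all_pairs :: "'v set \<Rightarrow> 'v set set" where
  "all_pairs V = {e. e \<subseteq> V \<and> card e = 2}"

definition edge_rel :: "'v set set \<Rightarrow> ('v \<times> 'v) set" where
  "edge_rel E = {(x, y). {x, y} \<in> E}"

definition connected_graph :: "'v set \<Rightarrow> 'v set set \<Rightarrow> bool" where
  "connected_graph V E \<longleftrightarrow> finite V \<and> V \<noteq> {} \<and> E \<subseteq> all_pairs V \<and>
     (\<forall>x\<in>V. \<forall>y\<in>V. (x, y) \<in> (edge_rel E)\<^sup>*)"

definition induced_connected :: "'v set set \<Rightarrow> bool" where
  "induced_connected Es \<longleftrightarrow> connected_graph (\<Union> Es) Es"

text \<open>Constructed vertex set: V' (tagged Inl) plus new vertices v_{i,j} = Inr (i,j).\<close>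
definition newV :: "nat \<Rightarrow> nat \<Rightarrow> ('a + nat \<times> nat) set" where
  "newV s t = {Inr (i, j) | i j. 1 \<le> i \<and> i \<le> s \<and> 1 \<le> j \<and> j \<le> t}"

definition cV :: "'a set \<Rightarrow> nat \<Rightarrow> nat \<Rightarrow> ('a + nat \<times> nat) set" where
  "cV V' s t = Inl ` V' \<union> newV s t"

definition cE :: "'a set \<Rightarrow> nat \<Rightarrow> nat \<Rightarrow> ('a + nat \<times> nat) set set" where
  "cE V' s t = all_pairs (cV V' s t)"

definition wstar :: "'a set set \<Rightarrow> (nat \<Rightarrow> 'a) \<Rightarrow> nat \<Rightarrow> nat \<Rightarrow> ('a + nat \<times> nat) set \<Rightarrow> real" where
  "wstar E' u s t e =
     (if \<exists>i j. 1 \<le> i \<and> i \<le> s \<and> 1 \<le> j \<and> j \<le> t \<and> e = {Inr (i, j), Inl (u i)} then 1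
      else if e \<in> (\<lambda>f. Inl ` f) ` E' then 1/2 else 0)"

definition alpha :: "'a set set \<Rightarrow> (nat \<Rightarrow> 'a) \<Rightarrow> nat \<Rightarrow> nat \<Rightarrow> ('a + nat \<times> nat) set set \<Rightarrow> real" where
  "alpha E' u s t Es = (\<Sum>e\<in>Es. wstar E' u s t e) / real (card Es)"

definition beta :: "'a set \<Rightarrow> 'a set set \<Rightarrow> (nat \<Rightarrow> 'a) \<Rightarrow> nat \<Rightarrow> nat \<Rightarrow> ('a + nat \<times> nat) set set \<Rightarrow> real" where
  "beta V' E' u s t Es = (\<Sum>e\<in>cE V' s t - Es. wstar E' u s t e) / real (card Es)"

definition A_thr :: "nat \<Rightarrow> nat \<Rightarrow> real \<Rightarrow> real" where
  "A_thr s t k = (real (s * t) + k) / (real (s * t) + 2 * k)"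

definition B_thr :: "'a set set \<Rightarrow> nat \<Rightarrow> nat \<Rightarrow> real \<Rightarrow> real" where
  "B_thr E' s t k = ((1/2) * (real (card E') - 2 * k)) / (real (s * t) + 2 * k)"

definition admissible :: "'a set \<Rightarrow> 'a set set \<Rightarrow> (nat \<Rightarrow> 'a) \<Rightarrow> nat \<Rightarrow> nat \<Rightarrow> real \<Rightarrow> ('a + nat \<times> nat) set set \<Rightarrow> bool" where
  "admissible V' E' u s t k Es \<longleftrightarrow> Es \<noteq> {} \<and> Es \<subseteq> cE V' s t \<and> induced_connected Es \<and>
     alpha E' u s t Es \<ge> A_thr s t k \<and> beta V' E' u s t Es \<le> B_thr E' s t k"

end

theory Submission
  imports Defs
begin

theorem lemma2:
  fixes V' :: "'a set" and E' :: "'a set set" and u :: "nat \<Rightarrow> 'a"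
    and s t :: nat and k :: real and Es :: "('a + nat \<times> nat) set set"
  assumes "connected_graph V' E'"
    and "inj_on u {1..s}" and "u ` {1..s} \<subseteq> V'" and "s \<ge> 1"
    and "k \<ge> 0" and "real (card E') \<ge> 2 * k"
    and "t \<ge> 1"
    and "Es \<subseteq> cE V' s t" and "real (card Es) > real (s * t) + 2 * k"
  shows "alpha E' u s t Es < A_thr s t k \<and> \<not> admissible V' E' u s t k Es"
proof -
  define W1 :: "('a + nat \<times> nat) set set" where "W1 = (\<lambda>(i,j). {Inr(i,j), Inl (u i)}) ` ({1..s}\<times>{1..t})"
  have finW: "finite W1" unfolding W1_def by simp
  have cW: "card W1 \<le> s * t"
  proof -
    have "card ((\<lambda>(i,j). {Inr(i,j), Inl (u i)}) ` ({1..s}\<times>{1..t}) :: ('a + nat \<times> nat) set set)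
       \<le> card ({1..s}\<times>{1..t})" by (rule card_image_le) simp
    also have "\<dots> = s * t" by (simp add: card_cartesian_product)
    finally show ?thesis by (simp add: W1_def)
  qed
  have finV: "finite V'" using assms(1) unfolding connected_graph_def by simp
  have "finite (cV V' s t)" unfolding cV_def newV_def
  proof -
    have "{Inr (i, j) | i j. 1 \<le> i \<and> i \<le> s \<and> 1 \<le> j \<and> j \<le> t} \<subseteq> Inr ` ({1..s}\<times>{1..t})"
      by auto
    note sub = this
    show "finite (Inl ` V' \<union> {Inr (i, j) | i j. 1 \<le> i \<and> i \<le> s \<and> 1 \<le> j \<and> j \<le> t})"
      using finV finite_subset[OF sub] by simp
  qed
  then have "finite (Pow (cV V' s t))" by simp
  then have "finite (cE V' s t)" unfolding cE_def all_pairs_def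
    by (rule finite_subset[rotated]) auto
  then have fin: "finite Es" using assms(8) finite_subset by blast
  let ?n = "card Es" let ?c = "card (Es \<inter> W1)"
  have c1: "?c \<le> s * t" using cW card_mono[OF finW] by (meson Int_lower2 le_trans)
  have c2: "?c + card (Es - W1) = ?n" using fin by (metis card_Int_Diff)
  have wle: "wstar E' u s t e \<le> (if e \<in> W1 then 1 else 1/2)" for e
    unfolding wstar_def W1_def by (auto simp: image_iff; force)
  have "(\<Sum>e\<in>Es. wstar E' u s t e) \<le> (\<Sum>e\<in>Es. (if e \<in> W1 then 1 else 1/2))"
    by (rule sum_mono) (rule wle)
  also have "\<dots> = real ?c + real (card (Es - W1)) / 2"
    using fin by (simp add: sum.If_cases Int_commute Diff_eq)
  finally have S: "(\<Sum>e\<in>Es. wstar E' u s t e) \<le> real ?c + real (card (Es - W1)) / 2" .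
  have "s*t \<ge> 1" using assms(4,7) by (simp add: Suc_le_eq)
  then have st1: "real (s*t) \<ge> 1" by linarith
  have npos: "real ?n > 0" using assms(5,9) st1 by linarith
  have "real ?c + real (card (Es - W1)) / 2 = (real ?n + real ?c) / 2"
  proof -
    have "real ?c + real (card (Es - W1)) = real ?n" using c2 by (metis of_nat_add)
    then show ?thesis by (simp add: field_simps)
  qed
  note eqh = this
  with S have S2: "(\<Sum>e\<in>Es. wstar E' u s t e) \<le> (real ?n + real (s*t)) / 2"
  proof -
    have "real ?c \<le> real (s*t)" using c1 by linarith
    then have "(real ?n + real ?c) / 2 \<le> (real ?n + real (s*t)) / 2" by (simp add: divide_right_mono)
    moreover have "(\<Sum>e\<in>Es. wstar E' u s t e) \<le> (real ?n + real ?c) / 2"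
      using S eqh by simp
    ultimately show ?thesis by (rule order_trans[rotated])
  qed
  have key: "(real ?n + real (s*t)) / 2 / real ?n < A_thr s t k"
  proof -
    have p: "real (s*t) + 2*k > 0" using st1 assms(5) by linarith
    have "real (s*t) * (real (s*t) + 2*k) < real ?n * real (s*t)"
    proof -
      have "(real (s*t) + 2*k) * real (s*t) < real ?n * real (s*t)"
        by (rule mult_strict_right_mono[OF assms(9)]) (use st1 in linarith)
      then show ?thesis by (simp only: mult.commute)
    qed
    then have "(real ?n + real (s*t)) * (real (s*t) + 2*k) < 2 * real ?n * (real (s*t) + k)"
      by (simp add: algebra_simps)
    then show ?thesis unfolding A_thr_def using p npos
      by (simp add: divide_simps) (simp add: algebra_simps)
  qed
  have "alpha E' u s t Es \<le> (real ?n + real (s*t)) / 2 / real ?n"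
    unfolding alpha_def by (rule divide_right_mono[OF S2]) (use npos in linarith)
  with key have "alpha E' u s t Es < A_thr s t k" by linarith
  then show ?thesis unfolding admissible_def by linarith
qed

end
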